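(* Fix $\tau>0$. For $n\ge1$ let $W_n$ be an $n\times n$ matrix of independent $\mathcal N(0,1)$ entries, and for $1\le k\le n$ let $\Gamma_k(\tau,n)$ be the number of $k\times k$ submatrices $U$ of $W_n$ (row set and column set arbitrary $k$-subsets of $\{1,\dots,n\}$) whose entry average $F(U)$ satisfies $F(U)\ge\tau$. There exist integers $n_0,k_0\ge1$ and a constant $C>0$, depending on $\tau$ but not on $k$ or $n$, such that for all $n\ge n_0$ and all $k\ge k_0$ with $k\le n$, \[ \frac{\operatorname{Var}\Gamma_k(\tau,n)}{(E\,\Gamma_k(\tau,n))^2}\le C\,k^4\sum_{l=1}^k\sum_{r=1}^k\frac{\binom{k}{l}\binom{n-k}{k-l}}{\binom{n}{k}}\,\frac{\binom{k}{r}\binom{n-k}{k-r}}{\binom{n}{k}}\exp\!\left\{\frac{rl\tau^2}{2}\left(1+\frac{k^2-rl}{k^2+rl}\right)\right\}. \]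
   Context: Binomial coefficients $\binom{a}{b}$ with $b>a$ are taken to be $0$. *)

theory Defs
  imports "HOL-Probability.Probability"
begin

definition gauss_matrix :: "nat \<Rightarrow> (nat \<times> nat \<Rightarrow> real) measure" where
  "gauss_matrix n = PiM ({..<n} \<times> {..<n}) (\<lambda>_. density lborel std_normal_density)"

definition avg_sub :: "(nat \<times> nat \<Rightarrow> real) \<Rightarrow> nat set \<Rightarrow> nat set \<Rightarrow> real" where
  "avg_sub w R C = (\<Sum>i\<in>R. \<Sum>j\<in>C. w (i, j)) / (real (card R) * real (card C))"

definition Gamma_count :: "real \<Rightarrow> nat \<Rightarrow> nat \<Rightarrow> (nat \<times> nat \<Rightarrow> real) \<Rightarrow> real" where
  "Gamma_count \<tau> n k w = real (card {(R, C). R \<subseteq> {..<n} \<and> card R = k \<and> C \<subseteq> {..<n} \<and> card C = k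
                                         \<and> avg_sub w R C \<ge> \<tau>})"

definition expect_Gamma :: "real \<Rightarrow> nat \<Rightarrow> nat \<Rightarrow> real" where
  "expect_Gamma \<tau> n k = integral\<^sup>L (gauss_matrix n) (Gamma_count \<tau> n k)"

definition var_Gamma :: "real \<Rightarrow> nat \<Rightarrow> nat \<Rightarrow> real" where
  "var_Gamma \<tau> n k = integral\<^sup>L (gauss_matrix n) (\<lambda>w. (Gamma_count \<tau> n k w - expect_Gamma \<tau> n k)\<^sup>2)"

end

theory Submission
  imports Defs
begin
abbreviation "SN \<equiv> density lborel std_normal_density"

lemma SN_prob: "prob_space SN"
  using prob_space_normal_density[of 1 0] by simp

lemma tail_upper:
  assumes x: "x \<ge> 0"
  shows "measure SN {x..} \<le> exp (-x\<^sup>2/2)"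
proof -
  have pt: "ennreal (std_normal_density t) * indicator {x..} t \<le> ennreal (exp (-x\<^sup>2/2)) * ennreal (normal_density x 1 t)" for t
  proof (cases "t \<ge> x")
    case True
    have "x * x \<le> t * x" using True x by (simp add: mult_right_mono)
    then have "- t\<^sup>2/2 \<le> -x\<^sup>2/2 + (-(t-x)\<^sup>2/2)"
      by (simp add: power2_eq_square algebra_simps)
    then have "exp (- t\<^sup>2/2) \<le> exp (-x\<^sup>2/2) * exp (-(t-x)\<^sup>2/2)"
      by (simp only: exp_add[symmetric] exp_le_cancel_iff)
    then have "std_normal_density t \<le> exp (-x\<^sup>2/2) * normal_density x 1 t"
      by (simp add: normal_density_def divide_right_mono)
    then show ?thesis using True by (simp add: ennreal_mult'[symmetric] indicator_def)
  qed (simp add: indicator_def)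
  have "emeasure SN {x..} = (\<integral>\<^sup>+t. ennreal (std_normal_density t) * indicator {x..} t \<partial>lborel)"
    by (simp add: emeasure_density)
  also have "\<dots> \<le> (\<integral>\<^sup>+t. ennreal (exp (-x\<^sup>2/2)) * ennreal (normal_density x 1 t) \<partial>lborel)"
    by (rule nn_integral_mono) (rule pt)
  also have "\<dots> = ennreal (exp (-x\<^sup>2/2)) * (\<integral>\<^sup>+t. ennreal (normal_density x 1 t) \<partial>lborel)"
    by (simp add: nn_integral_cmult)
  also have "(\<integral>\<^sup>+t. ennreal (normal_density x 1 t) \<partial>lborel) = 1"
    by (subst nn_integral_eq_integral) auto
  finally have "emeasure SN {x..} \<le> ennreal (exp (-x\<^sup>2/2))" by simp
  then show ?thesis
    by (simp add: measure_def enn2real_leI)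
qed

lemma tail_lower:
  assumes x: "x \<ge> 1"
  shows "measure SN {x..} \<ge> exp (-3/2) / (sqrt (2*pi) * x) * exp (-x\<^sup>2/2)"
proof -
  let ?b = "x + 1/x"
  have xpos: "x > 0" using x by simp
  have pt: "ennreal (std_normal_density ?b) * indicator {x..?b} t \<le> ennreal (std_normal_density t) * indicator {x..} t" for t
  proof (cases "x \<le> t \<and> t \<le> ?b")
    case True
    have "t\<^sup>2 \<le> ?b\<^sup>2" using True xpos by (intro power_mono) auto
    then have "exp (- ?b\<^sup>2/2) \<le> exp (- t\<^sup>2/2)" by simp
    then have "std_normal_density ?b \<le> std_normal_density t"
      unfolding std_normal_density_def by (intro mult_left_mono) auto
    then show ?thesis using True by (simp add: indicator_def)
  qed (auto simp add: indicator_def)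
  have "ennreal (std_normal_density ?b) * ennreal (1/x) = (\<integral>\<^sup>+t. ennreal (std_normal_density ?b) * indicator {x..?b} t \<partial>lborel)"
    using xpos by (simp add: nn_integral_cmult)
  also have "\<dots> \<le> (\<integral>\<^sup>+t. ennreal (std_normal_density t) * indicator {x..} t \<partial>lborel)"
    by (rule nn_integral_mono) (rule pt)
  also have "\<dots> = emeasure SN {x..}"
    by (simp add: emeasure_density)
  finally have 1: "ennreal (std_normal_density ?b * (1/x)) \<le> emeasure SN {x..}"
    using xpos by (simp add: ennreal_mult'[symmetric])
  have fin: "emeasure SN {x..} \<noteq> \<infinity>"
    using prob_space.emeasure_le_1[OF SN_prob, of "{x..}"] by (auto simp: top_unique)
  have 2: "std_normal_density ?b * (1/x) \<le> measure SN {x..}"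
    using enn2real_mono[OF 1] fin xpos by (simp add: measure_def less_top)
  have "?b\<^sup>2 = x\<^sup>2 + 2 + 1/x\<^sup>2" using xpos by (simp add: power2_eq_square field_simps)
  moreover have "1/x\<^sup>2 \<le> 1" using x by (simp add: power_le_one_iff)
  ultimately have "-x\<^sup>2/2 - 3/2 \<le> - ?b\<^sup>2/2" by simp
  then have "exp (-3/2) * exp (-x\<^sup>2/2) \<le> exp (- ?b\<^sup>2/2)"
    by (simp add: mult_exp_exp)
  then have "exp (-3/2) / (sqrt (2*pi) * x) * exp (-x\<^sup>2/2) \<le> std_normal_density ?b * (1/x)"
    using xpos by (simp add: std_normal_density_def field_simps)
  with 2 show ?thesis by linarith
qed

lemma (in prob_space) cov_ind:
  assumes A: "A \<in> events" and B: "B \<in> events"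
  shows "(\<integral>w. (indicator A w - q) * (indicator B w - q) \<partial>M) = prob (A \<inter> B) - q * prob A - q * prob B + q\<^sup>2"
proof -
  have eq: "(indicator A w - q) * (indicator B w - q) = indicator (A \<inter> B) w - q * indicator A w - q * indicator B w + q\<^sup>2" for w :: 'a
    by (auto simp: indicator_def power2_eq_square algebra_simps)
  have fA: "emeasure M A < \<infinity>" "emeasure M B < \<infinity>" "emeasure M (A \<inter> B) < \<infinity>"
    by (auto simp: less_top[symmetric])
  have "(\<integral>w. (indicator A w - q) * (indicator B w - q) \<partial>M) = (\<integral>w. indicator (A \<inter> B) w - q * indicator A w - q * indicator B w + q\<^sup>2 \<partial>M)"
    by (simp add: eq)
  also have "\<dots> = prob (A \<inter> B) - q * prob A - q * prob B + q\<^sup>2"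
    using A B fA sets.Int[OF A B]
    by (simp add: Int_absorb2 sets.sets_into_space prob_space)
  finally show ?thesis .
qed

lemma (in prob_space) var_sum_ind:
  assumes P: "finite P" and A: "\<And>p. p \<in> P \<Longrightarrow> A p \<in> events" and q: "\<And>p. p \<in> P \<Longrightarrow> prob (A p) = q"
  shows "(\<integral>w. ((\<Sum>p\<in>P. indicator (A p) w) - real (card P) * q)\<^sup>2 \<partial>M) =
     (\<Sum>p\<in>P. \<Sum>p'\<in>P. prob (A p \<inter> A p') - q\<^sup>2)"
proof -
  have eq: "((\<Sum>p\<in>P. indicator (A p) w) - real (card P) * q)\<^sup>2 = (\<Sum>p\<in>P. \<Sum>p'\<in>P. (indicator (A p) w - q) * (indicator (A p') w - q))" for w
  proof -
    have "(\<Sum>p\<in>P. indicator (A p) w) - real (card P) * q = (\<Sum>p\<in>P. (indicator (A p) w - q))"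
      by (simp add: sum_subtractf)
    then show ?thesis by (simp add: power2_eq_square sum_product)
  qed
  have int: "integrable M (\<lambda>w. (indicator (A p) w - q) * (indicator (A p') w - q))" if "p \<in> P" "p' \<in> P" for p p'
  proof -
    have eq2: "(\<lambda>w. (indicator (A p) w - q) * (indicator (A p') w - q)) = (\<lambda>w. indicator (A p \<inter> A p') w - q * indicator (A p) w - q * indicator (A p') w + q\<^sup>2)"
      by (auto simp: indicator_def power2_eq_square algebra_simps fun_eq_iff)
    show ?thesis unfolding eq2 using A that sets.Int[OF A A, of p p']
      by (intro Bochner_Integration.integrable_add Bochner_Integration.integrable_diff integrable_mult_right integrable_real_indicator) (auto simp: less_top[symmetric])
  qed
  have "(\<integral>w. ((\<Sum>p\<in>P. indicator (A p) w) - real (card P) * q)\<^sup>2 \<partial>M) = (\<integral>w. (\<Sum>p\<in>P. \<Sum>p'\<in>P. (indicator (A p) w - q) * (indicator (A p') w - q)) \<partial>M)"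
    by (simp add: eq)
  also have "\<dots> = (\<Sum>p\<in>P. \<Sum>p'\<in>P. (\<integral>w. (indicator (A p) w - q) * (indicator (A p') w - q) \<partial>M))"
    using int by (simp add: integral_sum integrable_sum)
  also have "\<dots> = (\<Sum>p\<in>P. \<Sum>p'\<in>P. prob (A p \<inter> A p') - q\<^sup>2)"
    by (intro sum.cong refl) (simp add: cov_ind A q power2_eq_square)
  finally show ?thesis .
qed

definition Ks :: "nat \<Rightarrow> nat \<Rightarrow> nat set set" where
  "Ks n k = {R. R \<subseteq> {..<n} \<and> card R = k}"

lemma finite_Ks: "finite (Ks n k)"
  unfolding Ks_def by (rule finite_subset[of _ "Pow {..<n}"]) auto

lemma card_Ks: "card (Ks n k) = n choose k"
  unfolding Ks_def using n_subsets[of "{..<n}" k] by simp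

lemma count_le:
  assumes R: "R \<subseteq> {..<n}" "card R = k"
  shows "card {R'\<in>Ks n k. card (R \<inter> R') = l} \<le> (k choose l) * ((n-k) choose (k-l))"
proof -
  let ?X = "{X. X \<subseteq> R \<and> card X = l}"
  let ?Y = "{Y. Y \<subseteq> {..<n} - R \<and> card Y = k - l}"
  have fR: "finite R" using R finite_subset by blast
  have sub: "{R'\<in>Ks n k. card (R \<inter> R') = l} \<subseteq> (\<lambda>(X,Y). X \<union> Y) ` (?X \<times> ?Y)"
  proof
    fix R' assume "R' \<in> {R'\<in>Ks n k. card (R \<inter> R') = l}"
    then have R': "R' \<subseteq> {..<n}" "card R' = k" "card (R \<inter> R') = l" by (auto simp: Ks_def)
    have fR': "finite R'" using R' finite_subset by blast
    have "card (R' - R) = card R' - card (R' \<inter> R)" using fR' by (simp add: card_Diff_subset_Int)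
    then have "card (R' - R) = k - l" using R' by (simp add: Int_commute)
    then have "(R \<inter> R', R' - R) \<in> ?X \<times> ?Y" using R' by auto
    moreover have "R' = (\<lambda>(X,Y). X \<union> Y) (R \<inter> R', R' - R)" by auto
    ultimately show "R' \<in> (\<lambda>(X,Y). X \<union> Y) ` (?X \<times> ?Y)" by blast
  qed
  have f1: "finite ?X" by (rule finite_subset[of _ "Pow R"]) (auto simp: fR)
  have f2: "finite ?Y" by (rule finite_subset[of _ "Pow {..<n}"]) auto
  have fin: "finite (?X \<times> ?Y)" using f1 f2 by simp
  have "card {R'\<in>Ks n k. card (R \<inter> R') = l} \<le> card ((\<lambda>(X,Y). X \<union> Y) ` (?X \<times> ?Y))"
    by (rule card_mono[OF finite_imageI[OF fin] sub])
  also have "\<dots> \<le> card (?X \<times> ?Y)" by (rule card_image_le[OF fin])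
  also have "\<dots> = (k choose l) * ((n-k) choose (k-l))"
    using n_subsets[of R l] n_subsets[of "{..<n} - R" "k - l"] fR R
    by (simp add: card_cartesian_product card_Diff_subset)
  finally show ?thesis .
qed

lemma sum_fiber_le:
  fixes u :: "nat \<Rightarrow> real"
  assumes u: "\<And>l. u l \<ge> 0" and R: "R \<subseteq> {..<n}" "card R = k"
  shows "(\<Sum>R'\<in>Ks n k. u (card (R \<inter> R'))) \<le> (\<Sum>l=0..k. real ((k choose l) * ((n-k) choose (k-l))) * u l)"
proof -
  have fR: "finite R" using R finite_subset by blast
  have img: "(\<lambda>R'. card (R \<inter> R')) ` Ks n k \<subseteq> {0..k}"
    using R fR by (auto simp: card_mono)
  have "(\<Sum>R'\<in>Ks n k. u (card (R \<inter> R'))) = (\<Sum>l=0..k. \<Sum>R'\<in>{R'\<in>Ks n k. card (R \<inter> R') = l}. u (card (R \<inter> R')))"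
    by (rule sum.group[symmetric, OF finite_Ks _ img]) simp
  also have "\<dots> = (\<Sum>l=0..k. real (card {R'\<in>Ks n k. card (R \<inter> R') = l}) * u l)"
    by (intro sum.cong refl) simp
  also have "\<dots> \<le> (\<Sum>l=0..k. real ((k choose l) * ((n-k) choose (k-l))) * u l)"
    by (intro sum_mono mult_right_mono u) (simp only: of_nat_le_iff count_le[OF R])
  finally show ?thesis .
qed

lemma sum_prod_split: "(\<Sum>p\<in>A \<times> B. f p) = (\<Sum>x\<in>A. \<Sum>y\<in>B. f (x, y))"
  by (simp add: sum.cartesian_product)

lemma double_count:
  fixes h :: "nat \<Rightarrow> nat \<Rightarrow> real"
  assumes h: "\<And>l r. h l r \<ge> 0"
  shows "(\<Sum>p\<in>Ks n k \<times> Ks n k. \<Sum>p'\<in>Ks n k \<times> Ks n k. h (card (fst p \<inter> fst p')) (card (snd p \<inter> snd p'))) \<le>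
    (\<Sum>l=0..k. \<Sum>r=0..k. (real (n choose k) * real ((k choose l) * ((n-k) choose (k-l)))) *
       (real (n choose k) * real ((k choose r) * ((n-k) choose (k-r)))) * h l r)"
proof -
  let ?K = "Ks n k"
  let ?a = "\<lambda>l. real ((k choose l) * ((n-k) choose (k-l)))"
  have Kd: "R \<subseteq> {..<n}" "card R = k" if "R \<in> ?K" for R using that by (auto simp: Ks_def)
  have "(\<Sum>p\<in>?K \<times> ?K. \<Sum>p'\<in>?K \<times> ?K. h (card (fst p \<inter> fst p')) (card (snd p \<inter> snd p'))) =
     (\<Sum>R\<in>?K. \<Sum>C\<in>?K. \<Sum>R'\<in>?K. \<Sum>C'\<in>?K. h (card (R \<inter> R')) (card (C \<inter> C')))"
    by (simp only: sum_prod_split fst_conv snd_conv)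
  also have "\<dots> = (\<Sum>R\<in>?K. \<Sum>R'\<in>?K. \<Sum>C\<in>?K. \<Sum>C'\<in>?K. h (card (R \<inter> R')) (card (C \<inter> C')))"
    by (rule sum.cong[OF refl], rule sum.swap)
  also have "\<dots> \<le> (\<Sum>R\<in>?K. \<Sum>R'\<in>?K. \<Sum>C\<in>?K. \<Sum>r=0..k. ?a r * h (card (R \<inter> R')) r)"
    by (intro sum_mono sum_fiber_le h Kd) 
  also have "\<dots> = (\<Sum>R\<in>?K. \<Sum>R'\<in>?K. real (n choose k) * (\<Sum>r=0..k. ?a r * h (card (R \<inter> R')) r))"
    by (simp add: card_Ks)
  also have "\<dots> \<le> (\<Sum>R\<in>?K. \<Sum>l=0..k. ?a l * (real (n choose k) * (\<Sum>r=0..k. ?a r * h l r)))"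
    by (intro sum_mono sum_fiber_le Kd mult_nonneg_nonneg sum_nonneg h) auto
  also have "\<dots> = real (n choose k) * (\<Sum>l=0..k. ?a l * (real (n choose k) * (\<Sum>r=0..k. ?a r * h l r)))"
    by (simp add: card_Ks)
  also have "\<dots> = (\<Sum>l=0..k. \<Sum>r=0..k. (real (n choose k) * ?a l) * (real (n choose k) * ?a r) * h l r)"
    by (simp add: sum_distrib_left mult_ac)
  finally show ?thesis .
qed

locale gm = fixes n :: nat
begin

abbreviation "I \<equiv> {..<n} \<times> {..<n}"

sublocale prob_space "gauss_matrix n"
  unfolding gauss_matrix_def
  by (intro prob_space_PiM SN_prob)

lemma space_M: "space (gauss_matrix n) = PiE I (\<lambda>_. UNIV)"
  by (simp add: gauss_matrix_def space_PiM)

lemma coord_meas: "e \<in> I \<Longrightarrow> (\<lambda>w. w e) \<in> borel_measurable (gauss_matrix n)"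
proof -
  assume e: "e \<in> I"
  have "(\<lambda>w. w e) \<in> PiM I (\<lambda>_. density lborel std_normal_density) \<rightarrow>\<^sub>M density lborel std_normal_density"
    by (rule measurable_component_singleton) (rule e)
  moreover have "PiM I (\<lambda>_. density lborel std_normal_density) \<rightarrow>\<^sub>M density lborel std_normal_density = PiM I (\<lambda>_. density lborel std_normal_density) \<rightarrow>\<^sub>M borel"
    by (rule measurable_cong_sets) auto
  ultimately show ?thesis unfolding gauss_matrix_def by simp
qed

lemma coord_distr_SN: "e \<in> I \<Longrightarrow> distr (gauss_matrix n) (density lborel std_normal_density) (\<lambda>w. w e) = density lborel std_normal_density"
  unfolding gauss_matrix_def
  by (rule distr_PiM_component) (auto intro: SN_prob)

lemma coord_distr: "e \<in> I \<Longrightarrow> distributed (gauss_matrix n) lborel (\<lambda>w. w e) std_normal_density"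
proof -
  assume e: "e \<in> I"
  have "distr (gauss_matrix n) lborel (\<lambda>w. w e) = distr (gauss_matrix n) (density lborel std_normal_density) (\<lambda>w. w e)"
    by (rule distr_cong) auto
  then show ?thesis using e coord_distr_SN[OF e] coord_meas[OF e]
    by (simp add: distributed_def)
qed

lemma indep_coords:
  assumes "n \<ge> 1"
  shows "indep_vars (\<lambda>_. borel) (\<lambda>e w. w e) I"
proof (subst indep_vars_iff_distr_eq_PiM')
  have "(0,0) \<in> I" using assms by auto
  then show "I \<noteq> {}" by blast
  show "\<And>e. e \<in> I \<Longrightarrow> random_variable borel (\<lambda>w. w e)" by (rule coord_meas)
  have "distr (gauss_matrix n) (Pi\<^sub>M I (\<lambda>_. borel)) (\<lambda>x. \<lambda>e\<in>I. x e) = distr (gauss_matrix n) (gauss_matrix n) (\<lambda>x. x)"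
    by (rule distr_cong) (auto simp: gauss_matrix_def space_PiM intro!: sets_PiM_cong)
  also have "\<dots> = gauss_matrix n" by simp
  also have "\<dots> = (Pi\<^sub>M I (\<lambda>e. distr (gauss_matrix n) borel (\<lambda>w. w e)))"
    unfolding gauss_matrix_def
  proof (rule PiM_cong)
    fix e assume e: "e \<in> I"
    have "distr (PiM I (\<lambda>_. density lborel std_normal_density)) borel (\<lambda>w. w e) = distr (gauss_matrix n) (density lborel std_normal_density) (\<lambda>w. w e)"
      by (rule distr_cong) (auto simp: gauss_matrix_def)
    then show "density lborel std_normal_density = distr (PiM I (\<lambda>_. density lborel std_normal_density)) borel (\<lambda>w. w e)"
      using coord_distr_SN[OF e] by simp
  qed simp
  finally show "distr (gauss_matrix n) (Pi\<^sub>M I (\<lambda>_. borel)) (\<lambda>x. \<lambda>e\<in>I. x e) = (Pi\<^sub>M I (\<lambda>e. distr (gauss_matrix n) borel (\<lambda>w. w e)))" .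
qed

lemma lin_distr:
  assumes n: "n \<ge> 1" and E: "finite E" "E \<noteq> {}" "E \<subseteq> I" and c: "\<And>e. e \<in> E \<Longrightarrow> c e > 0"
  shows "distributed (gauss_matrix n) lborel (\<lambda>w. \<Sum>e\<in>E. c e * w e) (normal_density 0 (sqrt (\<Sum>e\<in>E. (c e)\<^sup>2)))"
proof -
  have ind: "indep_vars (\<lambda>_. borel) (\<lambda>e w. c e * w e) E"
    using indep_vars_compose2[OF indep_vars_subset[OF indep_coords[OF n] E(3)], of "\<lambda>e x. c e * x" "\<lambda>_. borel"]
    by simp
  have d: "distributed (gauss_matrix n) lborel (\<lambda>w. c e * w e) (normal_density 0 (c e))" if e: "e \<in> E" for e
    using normal_density_affine[OF coord_distr[of e], of "c e" 0] e E(3) c[OF e] by auto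
  have "distributed (gauss_matrix n) lborel (\<lambda>w. \<Sum>e\<in>E. c e * w e) (normal_density (\<Sum>e\<in>E. 0) (sqrt (\<Sum>e\<in>E. (c e)\<^sup>2)))"
    by (rule sum_indep_normal[OF E(1,2) ind c d])
  then show ?thesis by simp
qed

lemma prob_lin:
  assumes n: "n \<ge> 1" and E: "finite E" "E \<noteq> {}" "E \<subseteq> I" and c: "\<And>e. e \<in> E \<Longrightarrow> c e > 0"
  shows "prob {w \<in> space (gauss_matrix n). t \<le> (\<Sum>e\<in>E. c e * w e)} =
    measure (density lborel std_normal_density) {t / sqrt (\<Sum>e\<in>E. (c e)\<^sup>2)..}"
proof -
  define \<sigma> where "\<sigma> = sqrt (\<Sum>e\<in>E. (c e)\<^sup>2)"
  have c2: "\<And>e. e \<in> E \<Longrightarrow> 0 < (c e)\<^sup>2" using c by (metis less_irrefl zero_less_power2)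
  have sp: "\<sigma> > 0" unfolding \<sigma>_def using E c2 by (intro real_sqrt_gt_zero sum_pos)
  have "distributed (gauss_matrix n) lborel (\<lambda>w. \<Sum>e\<in>E. c e * w e) (normal_density 0 \<sigma>)"
    unfolding \<sigma>_def by (rule lin_distr[OF assms])
  then have D: "distributed (gauss_matrix n) lborel (\<lambda>w. ((\<Sum>e\<in>E. c e * w e) - 0) / \<sigma>) std_normal_density"
    using normal_standard_normal_convert[OF sp, of "\<lambda>w. \<Sum>e\<in>E. c e * w e" 0] by blast
  have "measure (density lborel std_normal_density) {t / \<sigma>..} = measure (distr (gauss_matrix n) lborel (\<lambda>w. ((\<Sum>e\<in>E. c e * w e) - 0) / \<sigma>)) {t/\<sigma>..}"
    using D by (simp add: distributed_def)
  also have "\<dots> = prob ((\<lambda>w. ((\<Sum>e\<in>E. c e * w e) - 0) / \<sigma>) -` {t/\<sigma>..} \<inter> space (gauss_matrix n))"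
    using D by (intro measure_distr) (auto simp: distributed_def)
  also have "((\<lambda>w. ((\<Sum>e\<in>E. c e * w e) - 0) / \<sigma>) -` {t/\<sigma>..} \<inter> space (gauss_matrix n)) = {w \<in> space (gauss_matrix n). t \<le> (\<Sum>e\<in>E. c e * w e)}"
    using sp by (auto simp: divide_le_cancel)
  finally show ?thesis unfolding \<sigma>_def by simp
qed

lemma prob_indep:
  assumes n: "n \<ge> 1" and E: "finite E" "E \<subseteq> I" and E': "finite E'" "E' \<subseteq> I" and disj: "E \<inter> E' = {}"
  shows "prob {w \<in> space (gauss_matrix n). t \<le> (\<Sum>e\<in>E. c e * w e) \<and> t \<le> (\<Sum>e\<in>E'. c e * w e)} =
    prob {w \<in> space (gauss_matrix n). t \<le> (\<Sum>e\<in>E. c e * w e)} * prob {w \<in> space (gauss_matrix n). t \<le> (\<Sum>e\<in>E'. c e * w e)}"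
proof -
  have iv: "indep_var (PiM E (\<lambda>_. borel)) (\<lambda>\<omega>. restrict (\<lambda>i. \<omega> i) E) (PiM E' (\<lambda>_. borel)) (\<lambda>\<omega>. restrict (\<lambda>i. \<omega> i) E')"
    using indep_var_restrict[OF indep_coords[OF n] disj E(2) E'(2)] by simp
  have m1: "(\<lambda>x. \<Sum>e\<in>E. c e * x e) \<in> borel_measurable (PiM E (\<lambda>_. borel))"
    by (intro borel_measurable_sum borel_measurable_times measurable_component_singleton) auto
  have m2: "(\<lambda>x. \<Sum>e\<in>E'. c e * x e) \<in> borel_measurable (PiM E' (\<lambda>_. borel))"
    by (intro borel_measurable_sum borel_measurable_times measurable_component_singleton) auto
  have iv2: "indep_var borel (\<lambda>w. \<Sum>e\<in>E. c e * w e) borel (\<lambda>w. \<Sum>e\<in>E'. c e * w e)"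
    using indep_var_compose[OF iv m1 m2] by (simp add: o_def)
  have "\<P>(w in gauss_matrix n. (\<Sum>e\<in>E. c e * w e) \<in> {t..} \<and> (\<Sum>e\<in>E'. c e * w e) \<in> {t..}) =
     \<P>(w in gauss_matrix n. (\<Sum>e\<in>E. c e * w e) \<in> {t..}) * \<P>(w in gauss_matrix n. (\<Sum>e\<in>E'. c e * w e) \<in> {t..})"
    by (rule prob_indep_random_variable[OF iv2]) auto
  then show ?thesis by simp
qed


definition SS :: "nat set \<times> nat set \<Rightarrow> (nat \<times> nat \<Rightarrow> real) \<Rightarrow> real" where
  "SS p w = (\<Sum>e\<in>fst p \<times> snd p. w e)"

definition AA :: "real \<Rightarrow> nat set \<times> nat set \<Rightarrow> (nat \<times> nat \<Rightarrow> real) set" where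
  "AA t p = {w \<in> space (gauss_matrix n). t \<le> SS p w}"

lemma KsD: "R \<in> Ks n k \<Longrightarrow> R \<subseteq> {..<n} \<and> card R = k \<and> finite R"
  by (auto simp: Ks_def intro: finite_subset)

lemma SS_meas: "p \<in> Ks n k \<times> Ks n k \<Longrightarrow> SS p \<in> borel_measurable (gauss_matrix n)"
  unfolding SS_def by (intro borel_measurable_sum coord_meas) (auto dest!: KsD)

lemma AA_events: "p \<in> Ks n k \<times> Ks n k \<Longrightarrow> AA t p \<in> events"
proof -
  assume p: "p \<in> Ks n k \<times> Ks n k"
  have "AA t p = SS p -` {t..} \<inter> space (gauss_matrix n)" by (auto simp: AA_def)
  then show ?thesis using measurable_sets[OF SS_meas[OF p], of "{t..}"] by simp
qed

lemma AA_prob: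
  assumes n: "n \<ge> 1" and k: "k \<ge> 1" and p: "p \<in> Ks n k \<times> Ks n k"
  shows "prob (AA t p) = measure SN {t / real k..}"
proof -
  obtain R C where pRC: "p = (R, C)" by (cases p)
  have R: "R \<subseteq> {..<n}" "card R = k" "finite R" and C: "C \<subseteq> {..<n}" "card C = k" "finite C"
    using p pRC by (auto dest!: KsD)
  have ne: "R \<times> C \<noteq> {}" using R C k by auto
  have "prob {w \<in> space (gauss_matrix n). t \<le> (\<Sum>e\<in>R \<times> C. (\<lambda>_. 1::real) e * w e)} =
    measure SN {t / sqrt (\<Sum>e\<in>R \<times> C. ((\<lambda>_. 1::real) e)\<^sup>2)..}"
    by (rule prob_lin[OF n]) (use R C ne in auto)
  moreover have "sqrt (\<Sum>e\<in>R \<times> C. ((\<lambda>_. 1::real) e)\<^sup>2) = real k"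
    using R C by (simp add: card_cartesian_product power2_eq_square[symmetric])
  ultimately show ?thesis by (simp add: AA_def SS_def pRC)
qed

lemma pair_disj:
  assumes n: "n \<ge> 1" and p: "p \<in> Ks n k \<times> Ks n k" and p': "p' \<in> Ks n k \<times> Ks n k"
    and d: "fst p \<inter> fst p' = {} \<or> snd p \<inter> snd p' = {}"
  shows "prob (AA t p \<inter> AA t p') = prob (AA t p) * prob (AA t p')"
proof -
  obtain R C where pRC: "p = (R, C)" by (cases p)
  obtain R' C' where pRC': "p' = (R', C')" by (cases p')
  have R: "R \<subseteq> {..<n}" "finite R" and C: "C \<subseteq> {..<n}" "finite C"
    using p pRC by (auto dest!: KsD)
  have R': "R' \<subseteq> {..<n}" "finite R'" and C': "C' \<subseteq> {..<n}" "finite C'"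
    using p' pRC' by (auto dest!: KsD)
  have dj: "(R \<times> C) \<inter> (R' \<times> C') = {}" using d pRC pRC' by auto
  have "prob {w \<in> space (gauss_matrix n). t \<le> (\<Sum>e\<in>R \<times> C. (\<lambda>_. 1::real) e * w e) \<and> t \<le> (\<Sum>e\<in>R' \<times> C'. (\<lambda>_. 1::real) e * w e)} =
    prob {w \<in> space (gauss_matrix n). t \<le> (\<Sum>e\<in>R \<times> C. (\<lambda>_. 1::real) e * w e)} * prob {w \<in> space (gauss_matrix n). t \<le> (\<Sum>e\<in>R' \<times> C'. (\<lambda>_. 1::real) e * w e)}"
    by (rule prob_indep[OF n]) (use R C R' C' dj in auto)
  moreover have "AA t p \<inter> AA t p' = {w \<in> space (gauss_matrix n). t \<le> (\<Sum>e\<in>R \<times> C. (\<lambda>_. 1::real) e * w e) \<and> t \<le> (\<Sum>e\<in>R' \<times> C'. (\<lambda>_. 1::real) e * w e)}"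
    by (auto simp: AA_def SS_def pRC pRC')
  ultimately show ?thesis by (simp add: AA_def SS_def pRC pRC')
qed

lemma pair_overlap:
  assumes n: "n \<ge> 1" and k: "k \<ge> 1" and p: "p \<in> Ks n k \<times> Ks n k" and p': "p' \<in> Ks n k \<times> Ks n k"
  shows "prob (AA t p \<inter> AA t p') \<le>
    measure SN {2 * t / sqrt (2 * real k ^ 2 + 2 * real (card (fst p \<inter> fst p')) * real (card (snd p \<inter> snd p')))..}"
proof -
  obtain R C where pRC: "p = (R, C)" by (cases p)
  obtain R' C' where pRC': "p' = (R', C')" by (cases p')
  have R: "R \<subseteq> {..<n}" "finite R" "card R = k" and C: "C \<subseteq> {..<n}" "finite C" "card C = k"
    using p pRC by (auto dest!: KsD)
  have R': "R' \<subseteq> {..<n}" "finite R'" "card R' = k" and C': "C' \<subseteq> {..<n}" "finite C'" "card C' = k"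
    using p' pRC' by (auto dest!: KsD)
  define E where "E = R \<times> C"
  define E' where "E' = R' \<times> C'"
  define c where "c = (\<lambda>e. if e \<in> E \<inter> E' then 2 else (1::real))"
  have fE: "finite E" "finite E'" using R C R' C' by (auto simp: E_def E'_def)
  have EI: "E \<union> E' \<subseteq> I" using R C R' C' by (auto simp: E_def E'_def)
  have ne: "E \<union> E' \<noteq> {}" using R C k by (auto simp: E_def)
  have cardE: "card E = k^2" "card E' = k^2" using R C R' C'
    by (auto simp: E_def E'_def card_cartesian_product power2_eq_square)
  have EEi: "(E \<union> E') \<inter> {e\<in>E. e\<in>E'} = E \<inter> E'" by auto
  have EE: "E \<inter> E' = (R \<inter> R') \<times> (C \<inter> C')" by (auto simp: E_def E'_def)
  have sumeq: "(\<Sum>e\<in>E. w e) + (\<Sum>e\<in>E'. w e) = (\<Sum>e\<in>E \<union> E'. c e * w e)" for w :: "nat \<times> nat \<Rightarrow> real"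
  proof -
    have "(\<Sum>e\<in>E \<union> E'. c e * w e) = (\<Sum>e\<in>E \<union> E'. w e + (if e \<in> E \<inter> E' then w e else 0))"
      by (intro sum.cong refl) (auto simp: c_def)
    also have "(E \<union> E') \<inter> {e\<in>E. e\<in>E'} = E \<inter> E'" by auto
    then have "(\<Sum>e\<in>E \<union> E'. w e + (if e \<in> E \<inter> E' then w e else 0)) = (\<Sum>e\<in>E \<union> E'. w e) + (\<Sum>e\<in>E \<inter> E'. w e)"
      using fE by (simp add: sum.distrib sum.If_cases)
    also have "\<dots> = (\<Sum>e\<in>E. w e) + (\<Sum>e\<in>E'. w e)"
      using fE by (simp add: sum.union_inter)
    finally show ?thesis by simp
  qed
  have c2: "(\<Sum>e\<in>E \<union> E'. (c e)\<^sup>2) = 2 * real k ^ 2 + 2 * real (card (R \<inter> R')) * real (card (C \<inter> C'))"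
  proof -
    have "(\<Sum>e\<in>E \<union> E'. (c e)\<^sup>2) = (\<Sum>e\<in>E \<union> E'. 1 + (if e \<in> E \<inter> E' then 3 else 0))"
      by (intro sum.cong refl) (auto simp: c_def)
    also have "\<dots> = real (card (E \<union> E')) + 3 * real (card (E \<inter> E'))"
      using fE EEi by (simp add: sum.distrib sum.If_cases)
    also have "real (card (E \<union> E')) = real (card E) + real (card E') - real (card (E \<inter> E'))"
      using card_Un_Int[OF fE] by simp
    finally show ?thesis using cardE EE by (simp add: card_cartesian_product)
  qed
  have "AA t p \<inter> AA t p' \<subseteq> {w \<in> space (gauss_matrix n). 2 * t \<le> (\<Sum>e\<in>E \<union> E'. c e * w e)}"
    by (auto simp: AA_def SS_def pRC pRC' E_def[symmetric] E'_def[symmetric] sumeq[symmetric])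
  then have "prob (AA t p \<inter> AA t p') \<le> prob {w \<in> space (gauss_matrix n). 2 * t \<le> (\<Sum>e\<in>E \<union> E'. c e * w e)}"
  proof (rule finite_measure_mono)
    have m: "(\<lambda>w. \<Sum>e\<in>E \<union> E'. c e * w e) \<in> borel_measurable (gauss_matrix n)"
      by (intro borel_measurable_sum borel_measurable_times borel_measurable_const coord_meas) (use EI in auto)
    have "{w \<in> space (gauss_matrix n). 2 * t \<le> (\<Sum>e\<in>E \<union> E'. c e * w e)} = (\<lambda>w. \<Sum>e\<in>E \<union> E'. c e * w e) -` {2*t..} \<inter> space (gauss_matrix n)"
      by auto
    then show "{w \<in> space (gauss_matrix n). 2 * t \<le> (\<Sum>e\<in>E \<union> E'. c e * w e)} \<in> events"
      using measurable_sets[OF m, of "{2*t..}"] by simp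
  qed
  also have "\<dots> = measure SN {2 * t / sqrt (\<Sum>e\<in>E \<union> E'. (c e)\<^sup>2)..}"
    by (rule prob_lin[OF n]) (use fE EI ne in \<open>auto simp: c_def\<close>)
  finally show ?thesis using c2 pRC pRC' by simp
qed

lemma Gamma_eq:
  assumes k: "k \<ge> 1" and w: "w \<in> space (gauss_matrix n)"
  shows "Gamma_count \<tau> n k w = (\<Sum>p\<in>Ks n k \<times> Ks n k. indicator (AA (\<tau> * real k ^ 2) p) w)"
proof -
  have setq: "{(R, C). R \<subseteq> {..<n} \<and> card R = k \<and> C \<subseteq> {..<n} \<and> card C = k \<and> avg_sub w R C \<ge> \<tau>} =
     {p \<in> Ks n k \<times> Ks n k. \<tau> \<le> avg_sub w (fst p) (snd p)}"
    by (auto simp: Ks_def)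
  have eqv: "(\<tau> \<le> avg_sub w (fst p) (snd p)) = (\<tau> * real k ^ 2 \<le> SS p w)" if p: "p \<in> Ks n k \<times> Ks n k" for p
  proof -
    have c: "card (fst p) = k" "card (snd p) = k" using p by (auto dest!: KsD)
    have "avg_sub w (fst p) (snd p) = SS p w / (real k * real k)"
      unfolding avg_sub_def SS_def c by (simp add: sum.cartesian_product)
    moreover have "real k * real k > 0" using k by simp
    ultimately show ?thesis by (simp add: le_divide_eq power2_eq_square)
  qed
  have "Gamma_count \<tau> n k w = real (card {p \<in> Ks n k \<times> Ks n k. \<tau> \<le> avg_sub w (fst p) (snd p)})"
    unfolding Gamma_count_def setq ..
  also have "\<dots> = (\<Sum>p\<in>Ks n k \<times> Ks n k. if \<tau> \<le> avg_sub w (fst p) (snd p) then 1 else 0)"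
    by (simp add: sum.inter_filter[symmetric] finite_Ks)
  also have "\<dots> = (\<Sum>p\<in>Ks n k \<times> Ks n k. indicator (AA (\<tau> * real k ^ 2) p) w)"
    by (intro sum.cong refl) (simp add: eqv AA_def w indicator_def)
  finally show ?thesis .
qed

lemma expect_eq:
  assumes n: "n \<ge> 1" and k: "k \<ge> 1"
  shows "expect_Gamma \<tau> n k = real (card (Ks n k \<times> Ks n k)) * measure SN {\<tau> * real k..}"
proof -
  have "expect_Gamma \<tau> n k = (\<integral>w. (\<Sum>p\<in>Ks n k \<times> Ks n k. indicator (AA (\<tau> * real k ^ 2) p) w) \<partial>gauss_matrix n)"
    unfolding expect_Gamma_def by (intro Bochner_Integration.integral_cong refl Gamma_eq k)
  also have "\<dots> = (\<Sum>p\<in>Ks n k \<times> Ks n k. prob (AA (\<tau> * real k ^ 2) p))"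
  proof -
    have "(\<integral>w. (\<Sum>p\<in>Ks n k \<times> Ks n k. indicator (AA (\<tau> * real k ^ 2) p) w :: real) \<partial>gauss_matrix n) =
      (\<Sum>p\<in>Ks n k \<times> Ks n k. (\<integral>w. (indicator (AA (\<tau> * real k ^ 2) p) w :: real) \<partial>gauss_matrix n))"
      by (rule Bochner_Integration.integral_sum) (auto intro!: integrable_real_indicator AA_events simp: less_top[symmetric])
    also have "\<dots> = (\<Sum>p\<in>Ks n k \<times> Ks n k. prob (AA (\<tau> * real k ^ 2) p))"
      by (intro sum.cong refl) (simp add: AA_def Int_absorb2)
    finally show ?thesis .
  qed
  also have "\<dots> = (\<Sum>p\<in>Ks n k \<times> Ks n k. measure SN {\<tau> * real k..})"
    using k by (intro sum.cong refl) (simp add: AA_prob[OF n k] power2_eq_square)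
  finally show ?thesis by simp
qed

lemma var_eq:
  assumes n: "n \<ge> 1" and k: "k \<ge> 1"
  shows "var_Gamma \<tau> n k = (\<Sum>p\<in>Ks n k \<times> Ks n k. \<Sum>p'\<in>Ks n k \<times> Ks n k.
      prob (AA (\<tau> * real k ^ 2) p \<inter> AA (\<tau> * real k ^ 2) p') - (measure SN {\<tau> * real k..})\<^sup>2)"
proof -
  have 1: "var_Gamma \<tau> n k = (\<integral>w. ((\<Sum>p\<in>Ks n k \<times> Ks n k. indicator (AA (\<tau> * real k ^ 2) p) w) - real (card (Ks n k \<times> Ks n k)) * measure SN {\<tau> * real k..})\<^sup>2 \<partial>gauss_matrix n)"
    unfolding var_Gamma_def expect_eq[OF n k] by (intro Bochner_Integration.integral_cong refl) (subst Gamma_eq[OF k], assumption, rule refl)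
  show ?thesis unfolding 1
    by (rule var_sum_ind) (use k in \<open>auto simp: finite_Ks AA_events AA_prob[OF n k] power2_eq_square\<close>)
qed

lemma h_bound:
  fixes \<tau> :: real and l r k :: nat
  assumes \<tau>: "\<tau> > 0" and tk: "\<tau> * real k \<ge> 1" and l: "l \<ge> 1" and r: "r \<ge> 1"
  shows "measure SN {2 * (\<tau> * real k ^ 2) / sqrt (2 * real k ^ 2 + 2 * real l * real r)..} / (measure SN {\<tau> * real k..})\<^sup>2
    \<le> (2 * pi * exp 3 * \<tau>\<^sup>2) * real k ^ 4 * exp (real r * real l * \<tau>\<^sup>2 / 2 *
               (1 + (real k ^ 2 - real r * real l) / (real k ^ 2 + real r * real l)))"
proof -
  define x where "x = \<tau> * real k"
  define s where "s = 2 * (\<tau> * real k ^ 2) / sqrt (2 * real k ^ 2 + 2 * real l * real r)"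
  define L where "L = exp (-3/2) / (sqrt (2*pi) * x) * exp (-x\<^sup>2/2)"
  have x1: "x \<ge> 1" using tk by (simp add: x_def)
  have kpos: "real k > 0" using tk \<tau> by (cases "k = 0") auto
  have lr: "real l * real r > 0" using l r by simp
  have den: "2 * real k ^ 2 + 2 * real l * real r > 0" using kpos lr by (simp add: add_pos_pos)
  have s0: "s \<ge> 0" unfolding s_def using \<tau> den by simp
  have hq: "measure SN {s..} \<le> exp (-s\<^sup>2/2)" by (rule tail_upper[OF s0])
  have Lpos: "L > 0" unfolding L_def using x1 by simp
  have qL: "measure SN {x..} \<ge> L" unfolding L_def by (rule tail_lower[OF x1])
  have q2: "(measure SN {x..})\<^sup>2 \<ge> L\<^sup>2" using qL Lpos by (intro power_mono) auto
  have L2: "L\<^sup>2 = exp (-3) * exp (-x\<^sup>2) / (2 * pi * x\<^sup>2)"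
  proof -
    have "L\<^sup>2 = (exp (-3/2))\<^sup>2 * (exp (-x\<^sup>2/2))\<^sup>2 / ((sqrt (2*pi))\<^sup>2 * x\<^sup>2)"
      unfolding L_def by (simp add: power_divide power_mult_distrib)
    also have "(exp (-3/2::real))\<^sup>2 = exp (-3)" unfolding power2_eq_square by (subst exp_add[symmetric]) simp
    also have "(exp (-x\<^sup>2/2))\<^sup>2 = exp (-x\<^sup>2)" unfolding power2_eq_square by (subst exp_add[symmetric]) simp
    finally show ?thesis by simp
  qed
  have ex: "x\<^sup>2 - s\<^sup>2/2 = real r * real l * \<tau>\<^sup>2 / 2 * (1 + (real k ^ 2 - real r * real l) / (real k ^ 2 + real r * real l))"
  proof -
    have "s\<^sup>2 = 4 * \<tau>\<^sup>2 * real k ^ 4 / (2 * real k ^ 2 + 2 * real l * real r)"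
      unfolding s_def using den by (simp add: power_divide power_mult_distrib)
    moreover have "real k ^ 2 + real r * real l > 0" using kpos lr by (simp add: add_pos_pos mult.commute)
    ultimately show ?thesis unfolding x_def using den
      by (simp add: field_simps power2_eq_square) (simp add: algebra_simps power4_eq_xxxx)
  qed
  have "measure SN {s..} / (measure SN {x..})\<^sup>2 \<le> exp (-s\<^sup>2/2) / L\<^sup>2"
    using hq q2 Lpos by (intro frac_le) auto
  also have "exp (-s\<^sup>2/2) / L\<^sup>2 = 2 * pi * x\<^sup>2 * exp (3 + x\<^sup>2 - s\<^sup>2/2)"
  proof -
    have e: "exp (3 + x\<^sup>2 - s\<^sup>2/2) * (exp (-3) * exp (-x\<^sup>2)) = exp (-s\<^sup>2/2)"
      by (simp only: exp_add[symmetric]) simp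
    have "exp (-3) * exp (-x\<^sup>2) > 0" by simp
    then have "exp (-s\<^sup>2/2) / (exp (-3) * exp (-x\<^sup>2)) = exp (3 + x\<^sup>2 - s\<^sup>2/2)"
      using e by (simp add: divide_eq_eq)
    then show ?thesis unfolding L2 using x1 by (simp add: field_simps)
  qed
  also have "\<dots> = 2 * pi * x\<^sup>2 * exp (3 + (real r * real l * \<tau>\<^sup>2 / 2 * (1 + (real k ^ 2 - real r * real l) / (real k ^ 2 + real r * real l))))"
    using ex by (simp add: add_diff_eq[symmetric])
  also have "2 * pi * x\<^sup>2 * exp (3 + (real r * real l * \<tau>\<^sup>2 / 2 * (1 + (real k ^ 2 - real r * real l) / (real k ^ 2 + real r * real l))))
     \<le> (2 * pi * exp 3 * \<tau>\<^sup>2) * real k ^ 4 * exp (real r * real l * \<tau>\<^sup>2 / 2 *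
               (1 + (real k ^ 2 - real r * real l) / (real k ^ 2 + real r * real l)))"
  proof -
    have "real k ^ 2 \<le> real k ^ 4" using kpos tk
      by (cases "k = 0") (auto intro!: power_increasing)
    then have "\<tau>\<^sup>2 * real k ^ 2 \<le> \<tau>\<^sup>2 * real k ^ 4" by (intro mult_left_mono) auto
    then have "x\<^sup>2 \<le> \<tau>\<^sup>2 * real k ^ 4" unfolding x_def by (simp add: power_mult_distrib)
    then show ?thesis by (simp add: exp_add mult_right_mono mult_left_mono algebra_simps)
  qed
  finally show ?thesis unfolding s_def x_def .
qed

lemma main_bound:
  assumes n: "n \<ge> 1" and k: "k \<ge> 1" and kn: "k \<le> n" and \<tau>: "\<tau> > 0" and tk: "\<tau> * real k \<ge> 1"
  shows "var_Gamma \<tau> n k / (expect_Gamma \<tau> n k)\<^sup>2 \<le>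
        (2 * pi * exp 3 * \<tau>\<^sup>2) * real k ^ 4 * (\<Sum>l=1..k. \<Sum>r=1..k.
          (real (k choose l) * real ((n - k) choose (k - l)) / real (n choose k)) *
          (real (k choose r) * real ((n - k) choose (k - r)) / real (n choose k)) *
          exp (real r * real l * \<tau>\<^sup>2 / 2 *
               (1 + (real k ^ 2 - real r * real l) / (real k ^ 2 + real r * real l))))"
proof -
  define t where "t = \<tau> * real k ^ 2"
  define q where "q = measure SN {\<tau> * real k..}"
  define B where "B = real (n choose k)"
  define a where "a = (\<lambda>l. real ((k choose l) * ((n-k) choose (k-l))))"
  define h where "h = (\<lambda>l r. if l = 0 \<or> r = 0 then 0 else
      measure SN {2 * t / sqrt (2 * real k ^ 2 + 2 * real l * real r)..})"
  define C where "C = 2 * pi * exp 3 * \<tau>\<^sup>2"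
  define P where "P = Ks n k \<times> Ks n k"
  have h0: "h l r \<ge> 0" for l r by (simp add: h_def)
  have Bpos: "B > 0" unfolding B_def using kn by simp
  have qpos: "q > 0"
  proof -
    have x1: "\<tau> * real k \<ge> 1" by (rule tk)
    have "exp (-3/2) / (sqrt (2*pi) * (\<tau> * real k)) * exp (-(\<tau> * real k)\<^sup>2/2) > 0" using x1 by simp
    then show ?thesis unfolding q_def using tail_lower[OF x1] by linarith
  qed
  have step: "prob (AA t p \<inter> AA t p') - q\<^sup>2 \<le> h (card (fst p \<inter> fst p')) (card (snd p \<inter> snd p'))"
    if p: "p \<in> P" and p': "p' \<in> P" for p p'
  proof (cases "card (fst p \<inter> fst p') = 0 \<or> card (snd p \<inter> snd p') = 0")
    case True
    have fin: "finite (fst p \<inter> fst p')" "finite (snd p \<inter> snd p')"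
      using p p' unfolding P_def by (auto dest!: KsD)
    have "fst p \<inter> fst p' = {} \<or> snd p \<inter> snd p' = {}" using True fin by auto
    then have "prob (AA t p \<inter> AA t p') = prob (AA t p) * prob (AA t p')"
      using p p' unfolding P_def by (intro pair_disj n) auto
    also have "\<dots> = q\<^sup>2" using p p' k unfolding P_def q_def t_def
      by (simp add: AA_prob[OF n k] power2_eq_square)
    finally show ?thesis by (simp add: h0)
  next
    case False
    have "prob (AA t p \<inter> AA t p') \<le> h (card (fst p \<inter> fst p')) (card (snd p \<inter> snd p'))"
      using False pair_overlap[OF n k, of p p' t] p p' unfolding P_def h_def by auto
    then show ?thesis by (simp add: power2_eq_square) (smt (verit) mult_nonneg_nonneg qpos)
  qed
  have V: "var_Gamma \<tau> n k \<le> (\<Sum>l=1..k. \<Sum>r=1..k. (B * a l) * (B * a r) * h l r)"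
  proof -
    have "var_Gamma \<tau> n k = (\<Sum>p\<in>P. \<Sum>p'\<in>P. prob (AA t p \<inter> AA t p') - q\<^sup>2)"
      unfolding P_def t_def q_def by (rule var_eq[OF n k])
    also have "\<dots> \<le> (\<Sum>p\<in>P. \<Sum>p'\<in>P. h (card (fst p \<inter> fst p')) (card (snd p \<inter> snd p')))"
      by (intro sum_mono step)
    also have "\<dots> \<le> (\<Sum>l=0..k. \<Sum>r=0..k. (B * a l) * (B * a r) * h l r)"
      unfolding P_def B_def a_def by (rule double_count[OF h0])
    also have "\<dots> = (\<Sum>l=1..k. \<Sum>r=1..k. (B * a l) * (B * a r) * h l r)"
    proof -
      have z: "(\<Sum>r=0..k. (B * a l) * (B * a r) * h l r) = (\<Sum>r=1..k. (B * a l) * (B * a r) * h l r)" for l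
        by (subst sum.atLeast_Suc_atMost[of 0 k]) (auto simp: h_def)
      have "(\<Sum>l=0..k. \<Sum>r=0..k. (B * a l) * (B * a r) * h l r) = (\<Sum>l=0..k. \<Sum>r=1..k. (B * a l) * (B * a r) * h l r)"
        by (intro sum.cong refl z)
      also have "\<dots> = (\<Sum>l=1..k. \<Sum>r=1..k. (B * a l) * (B * a r) * h l r)"
        by (subst sum.atLeast_Suc_atMost[of 0 k]) (simp_all add: h_def)
      finally show ?thesis .
    qed
    finally show ?thesis .
  qed
  have E: "expect_Gamma \<tau> n k = B\<^sup>2 * q"
    unfolding expect_eq[OF n k] q_def B_def by (simp add: card_cartesian_product card_Ks power2_eq_square finite_Ks)
  have E2pos: "(expect_Gamma \<tau> n k)\<^sup>2 > 0" unfolding E using Bpos qpos by simp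
  have "var_Gamma \<tau> n k / (expect_Gamma \<tau> n k)\<^sup>2 \<le> (\<Sum>l=1..k. \<Sum>r=1..k. (B * a l) * (B * a r) * h l r) / (expect_Gamma \<tau> n k)\<^sup>2"
    using V E2pos by (intro divide_right_mono) auto
  also have "\<dots> = (\<Sum>l=1..k. \<Sum>r=1..k. (a l / B) * (a r / B) * (h l r / q\<^sup>2))"
    unfolding E sum_divide_distrib using Bpos qpos
    by (intro sum.cong refl) (simp add: field_simps power2_eq_square)
  also have "\<dots> \<le> (\<Sum>l=1..k. \<Sum>r=1..k. (a l / B) * (a r / B) * (C * real k ^ 4 * exp (real r * real l * \<tau>\<^sup>2 / 2 *
               (1 + (real k ^ 2 - real r * real l) / (real k ^ 2 + real r * real l)))))"
  proof (intro sum_mono mult_left_mono)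
    fix l r assume l: "l \<in> {1..k}" and r: "r \<in> {1..k}"
    show "h l r / q\<^sup>2 \<le> C * real k ^ 4 * exp (real r * real l * \<tau>\<^sup>2 / 2 *
               (1 + (real k ^ 2 - real r * real l) / (real k ^ 2 + real r * real l)))"
      using h_bound[OF \<tau> tk, of l r] l r unfolding h_def q_def C_def t_def by auto
    show "0 \<le> a l / B * (a r / B)" using Bpos by (simp add: a_def)
  qed
  also have "\<dots> = C * real k ^ 4 * (\<Sum>l=1..k. \<Sum>r=1..k.
          (real (k choose l) * real ((n - k) choose (k - l)) / real (n choose k)) *
          (real (k choose r) * real ((n - k) choose (k - r)) / real (n choose k)) *
          exp (real r * real l * \<tau>\<^sup>2 / 2 *
               (1 + (real k ^ 2 - real r * real l) / (real k ^ 2 + real r * real l))))"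
    unfolding sum_distrib_left a_def B_def by (intro sum.cong refl) (simp add: mult_ac)
  finally show ?thesis unfolding C_def .
qed

end

theorem lemma3:
  fixes \<tau> :: real
  assumes "\<tau> > 0"
  shows "\<exists>n0 k0 :: nat. n0 \<ge> 1 \<and> k0 \<ge> 1 \<and> (\<exists>C::real. C > 0 \<and>
    (\<forall>n k. n \<ge> n0 \<and> k \<ge> k0 \<and> k \<le> n \<longrightarrow>
      var_Gamma \<tau> n k / (expect_Gamma \<tau> n k)\<^sup>2 \<le>
        C * real k ^ 4 * (\<Sum>l=1..k. \<Sum>r=1..k.
          (real (k choose l) * real ((n - k) choose (k - l)) / real (n choose k)) *
          (real (k choose r) * real ((n - k) choose (k - r)) / real (n choose k)) *
          exp (real r * real l * \<tau>\<^sup>2 / 2 *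
               (1 + (real k ^ 2 - real r * real l) / (real k ^ 2 + real r * real l))))))"
proof -
  define k0 where "k0 = max 1 (nat \<lceil>1 / \<tau>\<rceil>)"
  have k01: "k0 \<ge> 1" by (simp add: k0_def)
  have Cpos: "2 * pi * exp 3 * \<tau>\<^sup>2 > 0" using assms by simp
  have main: "\<forall>n k. n \<ge> 1 \<and> k \<ge> k0 \<and> k \<le> n \<longrightarrow>
      var_Gamma \<tau> n k / (expect_Gamma \<tau> n k)\<^sup>2 \<le>
        (2 * pi * exp 3 * \<tau>\<^sup>2) * real k ^ 4 * (\<Sum>l=1..k. \<Sum>r=1..k.
          (real (k choose l) * real ((n - k) choose (k - l)) / real (n choose k)) *
          (real (k choose r) * real ((n - k) choose (k - r)) / real (n choose k)) *
          exp (real r * real l * \<tau>\<^sup>2 / 2 *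
               (1 + (real k ^ 2 - real r * real l) / (real k ^ 2 + real r * real l))))"
  proof (intro allI impI)
    fix n k :: nat assume a: "n \<ge> 1 \<and> k \<ge> k0 \<and> k \<le> n"
    interpret gm n .
    have k1: "k \<ge> 1" using a k01 by simp
    have "real k \<ge> real (nat \<lceil>1 / \<tau>\<rceil>)" using a unfolding k0_def by simp
    moreover have "real (nat \<lceil>1 / \<tau>\<rceil>) \<ge> 1 / \<tau>" by linarith
    ultimately have "real k \<ge> 1 / \<tau>" by linarith
    then have tk: "\<tau> * real k \<ge> 1" using assms by (simp add: field_simps)
    show "var_Gamma \<tau> n k / (expect_Gamma \<tau> n k)\<^sup>2 \<le>
        (2 * pi * exp 3 * \<tau>\<^sup>2) * real k ^ 4 * (\<Sum>l=1..k. \<Sum>r=1..k.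
          (real (k choose l) * real ((n - k) choose (k - l)) / real (n choose k)) *
          (real (k choose r) * real ((n - k) choose (k - r)) / real (n choose k)) *
          exp (real r * real l * \<tau>\<^sup>2 / 2 *
               (1 + (real k ^ 2 - real r * real l) / (real k ^ 2 + real r * real l))))"
      using main_bound[of k \<tau>] a k1 assms tk by simp
  qed
  show ?thesis
    by (intro exI[of _ 1] exI[of _ k0] conjI k01 exI[of _ "2 * pi * exp 3 * \<tau>\<^sup>2"] Cpos) (use main in auto)
qed

end
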